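(* Let $S_{n-1}$ denote the star graph with $n$ nodes (one center joined to $n-1$ leaves). For every fixed $\epsilon\in(0,1)$, $t_{\epsilon,1}(S_{n-1})=\Theta_\epsilon(n\log n)$; that is, there are constants $0<c_\epsilon\le C_\epsilon$ depending only on $\epsilon$ with $c_\epsilon n\log n\le t_{\epsilon,1}(S_{n-1})\le C_\epsilon n\log n$ for all $n\ge 3$.
   Context: For a finite, undirected, connected graph $G=(V,E)$ with $V=\{1,\dots,n\}$, the averaging process on $G$: the state vector $v(t)\in\mathbb R^n$, $t=0,1,2,\dots$, starts from a given $v(0)$; at each step $t\ge 1$ an edge $\{i,j\}\in E$ is chosen uniformly at random (independently of all previous choices) and both $v_i$ and $v_j$ are replaced by $(v_i+v_j)/2$, all other coordinates unchanged. Let $\bar v=(a,\dots,a)^T$ with $a=\frac1n\sum_i v_i(0)$. $t_{\epsilon,1}(G)$ is the least $t\in\mathbb N$ such that for every $v(0)$ with $\|v(0)\|_1=1$ one has $\mathbb E\|v(t)-\bar v\|_1\le\epsilon$. *)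

theory Defs
  imports Complex_Main
begin

text \<open>A graph on vertex set {1..n} is given by its edge set E, a set of
  2-element subsets of {1..n}. State vectors are functions nat => real,
  of which only the coordinates 1..n matter.\<close>

definition avg_step :: "nat set \<Rightarrow> (nat \<Rightarrow> real) \<Rightarrow> (nat \<Rightarrow> real)" where
  "avg_step e v = (\<lambda>k. if k \<in> e then (\<Sum>l\<in>e. v l) / 2 else v k)"

definition avg_run :: "nat set list \<Rightarrow> (nat \<Rightarrow> real) \<Rightarrow> (nat \<Rightarrow> real)" where
  "avg_run es v0 = foldl (\<lambda>v e. avg_step e v) v0 es"

definition l1_dev :: "nat \<Rightarrow> (nat \<Rightarrow> real) \<Rightarrow> (nat \<Rightarrow> real) \<Rightarrow> real" where
  "l1_dev n v0 v = (\<Sum>i\<in>{1..n}. \<bar>v i - (\<Sum>j\<in>{1..n}. v0 j) / real n\<bar>)"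

text \<open>Expectation of the L1 deviation after t steps, each step an
  independent uniformly random edge: average over all |E|^t edge sequences.\<close>
definition exp_l1_dev :: "nat \<Rightarrow> nat set set \<Rightarrow> nat \<Rightarrow> (nat \<Rightarrow> real) \<Rightarrow> real" where
  "exp_l1_dev n E t v0 =
     (\<Sum>es\<in>{es. set es \<subseteq> E \<and> length es = t}. l1_dev n v0 (avg_run es v0))
       / real (card E) ^ t"

definition t_eps1 :: "nat \<Rightarrow> nat set set \<Rightarrow> real \<Rightarrow> nat" where
  "t_eps1 n E \<epsilon> = (LEAST t. \<forall>v0. (\<Sum>i\<in>{1..n}. \<bar>v0 i\<bar>) = 1 \<longrightarrow> exp_l1_dev n E t v0 \<le> \<epsilon>)"

definition star_edges :: "nat \<Rightarrow> nat set set" where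
  "star_edges n = {{1, k} | k. k \<in> {2..n}}"

end

theory Submission
  imports Defs
begin


definition Pop :: "nat set set \<Rightarrow> ((nat\<Rightarrow>real)\<Rightarrow>real) \<Rightarrow> (nat\<Rightarrow>real) \<Rightarrow> real" where
 "Pop E F v = (\<Sum>e\<in>E. F (avg_step e v)) / real (card E)"

definition Ex :: "nat set set \<Rightarrow> nat \<Rightarrow> ((nat\<Rightarrow>real)\<Rightarrow>real) \<Rightarrow> (nat\<Rightarrow>real) \<Rightarrow> real" where
 "Ex E t F = (Pop E ^^ t) F"

lemma Ex_0[simp]: "Ex E 0 F = F" by (simp add: Ex_def)
lemma Ex_Suc: "Ex E (Suc t) F = Pop E (Ex E t F)" by (simp add: Ex_def)
lemma Ex_Suc': "Ex E (Suc t) F = Ex E t (Pop E F)" by (simp add: Ex_def funpow_Suc_right del: funpow.simps)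

lemma avg_run_Cons: "avg_run (e#es) v = avg_run es (avg_step e v)"
  by (simp add: avg_run_def)

lemma exp_eq:
  assumes "finite E" "card E > 0"
  shows "(\<Sum>es\<in>{es. set es \<subseteq> E \<and> length es = t}. F (avg_run es v)) / real (card E)^t = Ex E t F v"
proof (induction t arbitrary: v)
  case 0
  have "{es. set es \<subseteq> E \<and> length es = 0} = {[]}" by auto
  then show ?case by (simp add: avg_run_def)
next
  case (Suc t)
  let ?S = "{es. set es \<subseteq> E \<and> length es = t}"
  have fin: "finite ?S" using assms(1) by (simp add: finite_lists_length_eq)
  have inj: "inj_on (\<lambda>(xs, n). n#xs) (?S \<times> E)" by (auto simp: inj_on_def)
  have "(\<Sum>es\<in>{es. set es \<subseteq> E \<and> length es = Suc t}. F (avg_run es v))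
      = (\<Sum>p\<in>?S \<times> E. F (avg_run ((\<lambda>(xs, n). n#xs) p) v))"
    unfolding lists_length_Suc_eq by (subst sum.reindex[OF inj]) simp
  also have "\<dots> = (\<Sum>es\<in>?S. \<Sum>e\<in>E. F (avg_run es (avg_step e v)))"
    by (simp add: sum.cartesian_product avg_run_Cons split_def)
  also have "\<dots> = (\<Sum>e\<in>E. \<Sum>es\<in>?S. F (avg_run es (avg_step e v)))"
    by (rule sum.swap)
  finally have "(\<Sum>es\<in>{es. set es \<subseteq> E \<and> length es = Suc t}. F (avg_run es v)) / real (card E)^Suc t
     = (\<Sum>e\<in>E. (\<Sum>es\<in>?S. F (avg_run es (avg_step e v))) / real (card E)^t) / real (card E)"
    by (simp add: sum_divide_distrib field_simps)
  also have "\<dots> = Pop E (Ex E t F) v" using Suc by (simp add: Pop_def)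
  finally show ?case by (simp add: Ex_Suc)
qed

lemma Ex_mono:
  assumes cl: "\<And>v e. v \<in> I \<Longrightarrow> e \<in> E \<Longrightarrow> avg_step e v \<in> I"
    and le: "\<And>v. v \<in> I \<Longrightarrow> F v \<le> G v" and "v \<in> I"
  shows "Ex E t F v \<le> Ex E t G v"
  using \<open>v \<in> I\<close>
proof (induction t arbitrary: v)
  case 0 then show ?case using le by simp
next
  case (Suc t)
  have "(\<Sum>e\<in>E. Ex E t F (avg_step e v)) \<le> (\<Sum>e\<in>E. Ex E t G (avg_step e v))"
    by (rule sum_mono) (use Suc cl in auto)
  then show ?case by (simp add: Ex_Suc Pop_def divide_right_mono)
qed

lemma Ex_affine:
  assumes "finite E" "card E > 0"
  shows "Ex E t (\<lambda>v. a * F v + b) v = a * Ex E t F v + b"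
proof (induction t arbitrary: v)
  case 0 then show ?case by simp
next
  case (Suc t)
  have "(\<Sum>e\<in>E. a * Ex E t F (avg_step e v) + b) = a * (\<Sum>e\<in>E. Ex E t F (avg_step e v)) + real (card E) * b"
    by (simp add: sum.distrib sum_distrib_left)
  moreover have "(\<Sum>e\<in>E. Ex E t (\<lambda>v. a * F v + b) (avg_step e v)) = (\<Sum>e\<in>E. a * Ex E t F (avg_step e v) + b)"
    using Suc by simp
  moreover have "E \<noteq> {}" using assms by auto
  ultimately show ?case using assms by (simp add: Ex_Suc Pop_def add_divide_distrib)
qed



lemma Ex_contr:
  assumes "finite E" "card E > 0"
    and cl: "\<And>v e. v \<in> I \<Longrightarrow> e \<in> E \<Longrightarrow> avg_step e v \<in> I"
    and le: "\<And>v. v \<in> I \<Longrightarrow> Pop E F v \<le> lam * F v" and "0 \<le> lam"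
    and "v \<in> I"
  shows "Ex E t F v \<le> lam ^ t * F v"
  using \<open>v \<in> I\<close>
proof (induction t arbitrary: v)
  case 0 then show ?case by simp
next
  case (Suc t)
  have "Ex E (Suc t) F v = Ex E t (Pop E F) v" by (simp add: Ex_Suc')
  also have "\<dots> \<le> Ex E t (\<lambda>v. lam * F v + 0) v"
    by (rule Ex_mono[OF cl]) (use le Suc in auto)
  also have "\<dots> = lam * Ex E t F v" using Ex_affine[OF assms(1,2), of t lam F 0 v] by simp
  also have "\<dots> \<le> lam * (lam ^ t * F v)" using Suc \<open>0 \<le> lam\<close> by (simp add: mult_left_mono)
  finally show ?case by simp
qed

lemma Ex_drift:
  assumes "finite E" "card E > 0"
    and cl: "\<And>v e. v \<in> I \<Longrightarrow> e \<in> E \<Longrightarrow> avg_step e v \<in> I"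
    and le: "\<And>v. v \<in> I \<Longrightarrow> Pop E F v \<le> F v + b"
    and "v \<in> I"
  shows "Ex E t F v \<le> F v + real t * b"
  using \<open>v \<in> I\<close>
proof (induction t arbitrary: v)
  case 0 then show ?case by simp
next
  case (Suc t)
  have "Ex E (Suc t) F v = Ex E t (Pop E F) v" by (simp add: Ex_Suc')
  also have "\<dots> \<le> Ex E t (\<lambda>v. 1 * F v + b) v"
    by (rule Ex_mono[OF cl]) (use le Suc in auto)
  also have "\<dots> = Ex E t F v + b" using Ex_affine[OF assms(1,2), of t 1 F b v] by simp
  also have "\<dots> \<le> F v + real (Suc t) * b" using Suc by (simp add: algebra_simps)
  finally show ?case .
qed

lemma star_edges_img: "star_edges n = (\<lambda>k. {1,k}) ` {2..n}"
  by (auto simp: star_edges_def)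

lemma star_inj: "inj_on (\<lambda>k. {1::nat,k}) {2..n}"
  by (auto simp: inj_on_def doubleton_eq_iff)

lemma star_finite: "finite (star_edges n)"
  by (simp add: star_edges_img)

lemma star_card: "card (star_edges n) = n - 1"
proof -
  have "card ((\<lambda>k. {1::nat,k}) ` {2..n}) = card {2..n}" by (rule card_image[OF star_inj])
  then show ?thesis by (simp add: star_edges_img del: One_nat_def)
qed

lemma star_sum: "(\<Sum>e\<in>star_edges n. g e) = (\<Sum>k\<in>{2..n}. g {1,k})"
proof -
  have "sum g ((\<lambda>k. {1::nat,k}) ` {2..n}) = sum (g \<circ> (\<lambda>k. {1::nat,k})) {2..n}" by (rule sum.reindex[OF star_inj])
  then show ?thesis by (simp add: star_edges_img del: One_nat_def)
qed

lemma step_val: "k \<noteq> 1 \<Longrightarrow> avg_step {1,k} v i = (if i = 1 \<or> i = k then (v 1 + v k) / 2 else v i)"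
  by (simp add: avg_step_def)

lemma sum_split2:
  fixes n k :: nat and f :: "nat \<Rightarrow> real"
  assumes "k \<in> {2..n}"
  shows "(\<Sum>i\<in>{1..n}. f i) = f 1 + f k + (\<Sum>i\<in>{1..n} - {1,k}. f i)"
proof -
  have "1 \<in> {1..n}" "k \<in> {1..n} - {1}" using assms by auto
  then have "(\<Sum>i\<in>{1..n}. f i) = f 1 + (\<Sum>i\<in>{1..n} - {1}. f i)"
     "(\<Sum>i\<in>{1..n} - {1}. f i) = f k + (\<Sum>i\<in>{1..n} - {1} - {k}. f i)"
    by (auto intro: sum.remove)
  moreover have "{1..n} - {1} - {k} = {1..n} - {1,k}" by auto
  ultimately show ?thesis by (simp add: add.assoc)
qed

lemma sum_step:
  fixes \<phi> :: "real \<Rightarrow> real"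
  assumes "k \<in> {2..n}"
  shows "(\<Sum>i\<in>{1..n}. \<phi> (avg_step {1,k} v i)) =
     (\<Sum>i\<in>{1..n}. \<phi> (v i)) - \<phi> (v 1) - \<phi> (v k) + 2 * \<phi> ((v 1 + v k) / 2)"
proof -
  have k1: "k \<noteq> 1" using assms by auto
  have s1: "avg_step {1,k} v 1 = (v 1 + v k) / 2" "avg_step {1,k} v k = (v 1 + v k) / 2"
    using k1 by (auto simp: avg_step_def)
  have "(\<Sum>i\<in>{1..n}. \<phi> (avg_step {1,k} v i)) = \<phi> ((v 1 + v k) / 2) + \<phi> ((v 1 + v k) / 2)
      + (\<Sum>i\<in>{1..n} - {1,k}. \<phi> (avg_step {1,k} v i))"
    using sum_split2[OF assms, of "\<lambda>i. \<phi> (avg_step {1,k} v i)"] by (simp only: s1)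
  also have "(\<Sum>i\<in>{1..n} - {1,k}. \<phi> (avg_step {1,k} v i)) = (\<Sum>i\<in>{1..n} - {1,k}. \<phi> (v i))"
    by (rule sum.cong) (auto simp: avg_step_def k1)
  finally show ?thesis using sum_split2[OF assms, of "\<lambda>i. \<phi> (v i)"] by simp
qed

lemma sum_pres:
  assumes "k \<in> {2..n}"
  shows "(\<Sum>i\<in>{1..n}. avg_step {1,k} v i) = (\<Sum>i\<in>{1..n}. v i)"
  using sum_step[OF assms, of "\<lambda>x. x" v] by (simp add: field_simps)

lemma key_ineq:
  fixes v :: "nat \<Rightarrow> real"
  assumes "2 \<le> n" "(\<Sum>i\<in>{1..n}. v i) = real n * a"
  shows "(\<Sum>i\<in>{1..n}. (v i - a)^2) \<le> (\<Sum>k\<in>{2..n}. (v 1 - v k)^2)"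
proof -
  define x where "x i = v i - a" for i
  have ins: "{1..n} = insert 1 {2..n}" using assms by auto
  have S: "(\<Sum>k\<in>{2..n}. x k) = - x 1"
  proof -
    have "(\<Sum>i\<in>{1..n}. x i) = (\<Sum>i\<in>{1..n}. v i) - real n * a"
      by (simp add: x_def sum_subtractf)
    also have "\<dots> = 0" using assms by simp
    finally show ?thesis unfolding ins by simp
  qed
  have "(\<Sum>k\<in>{2..n}. (v 1 - v k)^2) = (\<Sum>k\<in>{2..n}. x 1 ^2 - 2 * x 1 * x k + (x k)^2)"
    by (rule sum.cong) (auto simp: x_def power2_eq_square algebra_simps)
  also have "\<dots> = real (n - 1) * x 1 ^ 2 - 2 * x 1 * (\<Sum>k\<in>{2..n}. x k) + (\<Sum>k\<in>{2..n}. (x k)^2)"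
    by (simp add: sum.distrib sum_subtractf sum_distrib_left)
  also have "\<dots> = real (n - 1) * x 1 ^ 2 + 2 * x 1 ^ 2 + (\<Sum>k\<in>{2..n}. (x k)^2)"
    by (simp add: S power2_eq_square)
  also have "\<dots> \<ge> x 1 ^ 2 + (\<Sum>k\<in>{2..n}. (x k)^2)" by simp
  moreover have "(\<Sum>i\<in>{1..n}. (v i - a)^2) = x 1 ^ 2 + (\<Sum>k\<in>{2..n}. (x k)^2)"
    unfolding ins by (simp add: x_def)
  ultimately show ?thesis by linarith
qed



definition FU :: "nat \<Rightarrow> real \<Rightarrow> (nat \<Rightarrow> real) \<Rightarrow> real" where
  "FU n a v = (\<Sum>i\<in>{1..n}. (v i - a)^2)"

lemma FU_step:
  assumes "k \<in> {2..n}"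
  shows "FU n a (avg_step {1,k} v) = FU n a v - (v 1 - v k)^2 / 2"
  using sum_step[OF assms, of "\<lambda>x. (x - a)^2" v] unfolding FU_def
  by (simp add: power2_eq_square field_simps)

lemma Pop_FU:
  assumes "2 \<le> n" "(\<Sum>i\<in>{1..n}. v i) = real n * a"
  shows "Pop (star_edges n) (FU n a) v \<le> (1 - 1 / (2 * real n)) * FU n a v"
proof -
  define D where "D = (\<Sum>k\<in>{2..n}. (v 1 - v k)^2)"
  have D: "FU n a v \<le> D" using key_ineq[OF assms] by (simp add: D_def FU_def)
  have F0: "0 \<le> FU n a v" unfolding FU_def by (simp add: sum_nonneg)
  have "(\<Sum>k\<in>{2..n}. FU n a (avg_step {1,k} v)) = (\<Sum>k\<in>{2..n}. FU n a v - (v 1 - v k)^2 / 2)"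
    by (intro sum.cong refl FU_step)
  then have "Pop (star_edges n) (FU n a) v = (\<Sum>k\<in>{2..n}. FU n a v - (v 1 - v k)^2 / 2) / real (n - 1)"
    unfolding Pop_def star_sum star_card by simp
  also have "\<dots> = FU n a v - D / (2 * real (n - 1))"
    using assms(1) by (simp add: sum_subtractf D_def sum_divide_distrib[symmetric] field_simps)
  also have "\<dots> \<le> FU n a v - FU n a v / (2 * real n)"
  proof -
    have "FU n a v / (2 * real n) \<le> FU n a v / (2 * real (n - 1))"
      using F0 assms(1) by (intro divide_left_mono) auto
    also have "\<dots> \<le> D / (2 * real (n - 1))" using D assms(1) by (intro divide_right_mono) auto
    finally show ?thesis by simp
  qed
  finally show ?thesis by (simp add: algebra_simps)
qed

lemma l1_le_FU:
  assumes "0 < \<epsilon>" "1 \<le> n"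
  shows "l1_dev n v0 v \<le> real n / (2 * \<epsilon>) * FU n ((\<Sum>j\<in>{1..n}. v0 j) / real n) v + \<epsilon> / 2"
proof -
  let ?a = "(\<Sum>j\<in>{1..n}. v0 j) / real n"
  have pt: "\<bar>x\<bar> \<le> real n / (2 * \<epsilon>) * x^2 + \<epsilon> / (2 * real n)" for x :: real
  proof -
    have "0 \<le> real n / (2 * \<epsilon>) * (\<bar>x\<bar> - \<epsilon> / real n)^2" using assms by simp
    also have "\<dots> = real n / (2 * \<epsilon>) * x^2 + \<epsilon> / (2 * real n) - \<bar>x\<bar>"
      using assms by (simp add: power2_eq_square field_simps)
    finally show ?thesis by simp
  qed
  have "l1_dev n v0 v \<le> (\<Sum>i\<in>{1..n}. real n / (2 * \<epsilon>) * (v i - ?a)^2 + \<epsilon> / (2 * real n))"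
    unfolding l1_dev_def by (rule sum_mono) (rule pt)
  also have "\<dots> = real n / (2 * \<epsilon>) * FU n ?a v + \<epsilon> / 2"
    using assms by (simp add: sum.distrib sum_distrib_left FU_def)
  finally show ?thesis .
qed

lemma FU_init:
  assumes "(\<Sum>i\<in>{1..n}. \<bar>v0 i\<bar>) = 1" "1 \<le> n"
  shows "FU n ((\<Sum>j\<in>{1..n}. v0 j) / real n) v0 \<le> 1"
proof -
  define s where "s = (\<Sum>j\<in>{1..n}. v0 j)"
  define a where "a = s / real n"
  have "FU n a v0 = (\<Sum>i\<in>{1..n}. (v0 i)^2) - 2 * a * s + real n * a^2"
    unfolding FU_def s_def
    by (simp add: power2_eq_square algebra_simps sum.distrib sum_subtractf sum_distrib_left)
  also have "\<dots> = (\<Sum>i\<in>{1..n}. (v0 i)^2) - real n * a^2"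
    using assms(2) by (simp add: a_def power2_eq_square field_simps)
  also have "\<dots> \<le> (\<Sum>i\<in>{1..n}. (v0 i)^2)" by simp
  also have "\<dots> \<le> (\<Sum>i\<in>{1..n}. \<bar>v0 i\<bar>)"
  proof (rule sum_mono)
    fix i assume i: "i \<in> {1..n}"
    have "\<bar>v0 i\<bar> \<le> 1" using member_le_sum[OF i, of "\<lambda>i. \<bar>v0 i\<bar>"] assms(1) by simp
    then have "\<bar>v0 i\<bar> * \<bar>v0 i\<bar> \<le> \<bar>v0 i\<bar>" by (rule mult_left_le) auto
    moreover have "(v0 i)^2 = \<bar>v0 i\<bar> * \<bar>v0 i\<bar>" by (simp flip: power2_eq_square)
    ultimately show "(v0 i)^2 \<le> \<bar>v0 i\<bar>" by simp
  qed
  finally show ?thesis using assms(1) by (simp add: a_def s_def)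
qed

lemma upper:
  assumes "0 < \<epsilon>" "\<epsilon> < 1" "2 \<le> n" "real T \<ge> 2 * real n * ln (real n / \<epsilon>^2)"
    and "(\<Sum>i\<in>{1..n}. \<bar>v0 i\<bar>) = 1"
  shows "exp_l1_dev n (star_edges n) T v0 \<le> \<epsilon>"
proof -
  let ?E = "star_edges n"
  let ?a = "(\<Sum>j\<in>{1..n}. v0 j) / real n"
  let ?lam = "1 - 1 / (2 * real n)"
  have fin: "finite ?E" and cp: "card ?E > 0" using assms(3) by (auto simp: star_finite star_card)
  have n0: "real n > 0" using assms(3) by simp
  have "exp_l1_dev n ?E T v0 = Ex ?E T (l1_dev n v0) v0"
    unfolding exp_l1_dev_def by (rule exp_eq[OF fin cp])
  also have "\<dots> \<le> Ex ?E T (\<lambda>v. real n / (2 * \<epsilon>) * FU n ?a v + \<epsilon> / 2) v0"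
    by (rule Ex_mono[where I = UNIV]) (use l1_le_FU[OF assms(1)] assms(3) in auto)
  also have "\<dots> = real n / (2 * \<epsilon>) * Ex ?E T (FU n ?a) v0 + \<epsilon> / 2"
    by (rule Ex_affine[OF fin cp])
  finally have st: "exp_l1_dev n ?E T v0 \<le> real n / (2 * \<epsilon>) * Ex ?E T (FU n ?a) v0 + \<epsilon> / 2" .
  have "Ex ?E T (FU n ?a) v0 \<le> ?lam ^ T * FU n ?a v0"
  proof (rule Ex_contr[OF fin cp, where I = "{v. (\<Sum>i\<in>{1..n}. v i) = real n * ?a}"])
    show "avg_step e v \<in> {v. (\<Sum>i\<in>{1..n}. v i) = real n * ?a}"
      if "v \<in> {v. (\<Sum>i\<in>{1..n}. v i) = real n * ?a}" "e \<in> ?E" for v e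
      using that sum_pres by (auto simp: star_edges_def)
    show "Pop ?E (FU n ?a) v \<le> ?lam * FU n ?a v"
      if "v \<in> {v. (\<Sum>i\<in>{1..n}. v i) = real n * ?a}" for v
      using Pop_FU[OF assms(3)] that by auto
    show "0 \<le> ?lam" using assms(3) by (simp add: field_simps)
    show "v0 \<in> {v. (\<Sum>i\<in>{1..n}. v i) = real n * ?a}" using n0 by simp
  qed
  also have "?lam ^ T * FU n ?a v0 \<le> \<epsilon>^2 / real n"
  proof -
    have l0: "0 \<le> ?lam" using assms(3) by (simp add: field_simps)
    have "?lam \<le> exp (- (1 / (2 * real n)))" using exp_ge_add_one_self[of "- (1 / (2 * real n))"] by simp
    then have "?lam ^ T \<le> exp (- (1 / (2 * real n))) ^ T" by (rule power_mono[OF _ l0])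
    also have "\<dots> = exp (- (real T / (2 * real n)))" by (simp add: exp_of_nat_mult[symmetric])
    also have "\<dots> \<le> exp (- ln (real n / \<epsilon>^2))"
      using assms(4) n0 by (simp add: field_simps)
    also have "\<dots> = \<epsilon>^2 / real n" using n0 assms(1) by (simp add: ln_div exp_minus exp_diff)
    finally have L: "?lam ^ T \<le> \<epsilon>^2 / real n" .
    have "?lam ^ T * FU n ?a v0 \<le> ?lam ^ T * 1"
      using FU_init[OF assms(5)] assms(3) l0 by (intro mult_left_mono) auto
    then show ?thesis using L by simp
  qed
  finally have "Ex ?E T (FU n ?a) v0 \<le> \<epsilon>^2 / real n" .
  then have "real n / (2 * \<epsilon>) * Ex ?E T (FU n ?a) v0 \<le> real n / (2 * \<epsilon>) * (\<epsilon>^2 / real n)"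
    using assms(1) n0 by (intro mult_left_mono) auto
  also have "\<dots> = \<epsilon> / 2" using assms(1) n0 by (simp add: power2_eq_square field_simps)
  finally have X: "real n / (2 * \<epsilon>) * Ex ?E T (FU n ?a) v0 \<le> \<epsilon> / 2" .
  show ?thesis using st X by linarith
qed



definition hh :: "real \<Rightarrow> real" where
  "hh x = (if x \<le> 0 then 0 else - x * ln x)"

lemma hh_avg:
  assumes "0 \<le> a" "0 \<le> b"
  shows "2 * hh ((a + b) / 2) \<le> hh a + hh b + (a + b)"
proof (cases "a + b = 0")
  case True then show ?thesis using assms by (simp add: hh_def)
next
  case False
  then have s: "a + b > 0" using assms by simp
  have ha: "hh a \<ge> - a * ln (a + b)"
    if "0 \<le> a" "0 \<le> b" "a + b > 0" for a b :: real
  proof (cases "a = 0")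
    case True then show ?thesis by (simp add: hh_def)
  next
    case False
    then have "a > 0" using that by simp
    then have "ln a \<le> ln (a + b)" using that by simp
    then show ?thesis using \<open>a > 0\<close> by (simp add: hh_def mult_left_mono)
  qed
  have l: "ln ((a + b) / 2) = ln (a + b) - ln 2" using s by (simp add: ln_div)
  have "2 * hh ((a + b) / 2) = - (a + b) * ln ((a + b) / 2)" using s by (simp add: hh_def algebra_simps)
  also have "\<dots> = - (a + b) * ln (a + b) + (a + b) * ln 2" unfolding l by (simp add: algebra_simps)
  also have "\<dots> \<le> - (a + b) * ln (a + b) + (a + b)"
    using s ln_2_less_1 by (intro add_left_mono) (simp add: mult_left_le)
  also have "\<dots> \<le> hh a + hh b + (a + b)"
    using ha[of a b] ha[of b a] assms s by (simp add: algebra_simps)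
  finally show ?thesis .
qed

lemma hh_nonneg: "0 \<le> x \<Longrightarrow> x \<le> 1 \<Longrightarrow> 0 \<le> hh x"
  by (auto simp: hh_def mult_nonneg_nonpos)

definition Phi :: "nat \<Rightarrow> (nat \<Rightarrow> real) \<Rightarrow> real" where
  "Phi n v = (\<Sum>i\<in>{1..n}. hh (v i)) + 2 * v 1"

definition InvL :: "nat \<Rightarrow> (nat \<Rightarrow> real) set" where
  "InvL n = {v. (\<forall>i\<in>{1..n}. 0 \<le> v i) \<and> (\<Sum>i\<in>{1..n}. v i) = 1}"

lemma InvL_closed:
  assumes "v \<in> InvL n" "e \<in> star_edges n"
  shows "avg_step e v \<in> InvL n"
proof -
  obtain k where k: "k \<in> {2..n}" "e = {1,k}" using assms(2) by (auto simp: star_edges_def)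
  have "0 \<le> avg_step {1,k} v i" if "i \<in> {1..n}" for i
  proof -
    have "0 \<le> v 1" "0 \<le> v k" using assms(1) k by (auto simp: InvL_def)
    then show ?thesis using assms(1) that k by (auto simp: InvL_def avg_step_def sum_nonneg)
  qed
  then show ?thesis using assms(1) sum_pres[OF k(1)] k by (auto simp: InvL_def)
qed

lemma Pop_Phi:
  assumes "2 \<le> n" "v \<in> InvL n"
  shows "Pop (star_edges n) (Phi n) v \<le> Phi n v + 2 / real (n - 1)"
proof -
  have nn: "\<And>i. i \<in> {1..n} \<Longrightarrow> 0 \<le> v i" and s1: "(\<Sum>i\<in>{1..n}. v i) = 1"
    using assms(2) by (auto simp: InvL_def)
  have st: "Phi n (avg_step {1,k} v) \<le> Phi n v + 2 * v k" if k: "k \<in> {2..n}" for k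
  proof -
    have k1: "k \<noteq> 1" using k by auto
    have a1: "avg_step {1,k} v 1 = (v 1 + v k) / 2" using k1 by (simp add: avg_step_def)
    have "0 \<le> v 1" "0 \<le> v k" using nn k by auto
    then have "2 * hh ((v 1 + v k) / 2) \<le> hh (v 1) + hh (v k) + (v 1 + v k)" by (rule hh_avg)
    moreover have "2 * ((v 1 + v k) / 2) = v 1 + v k" by simp
    ultimately show ?thesis unfolding Phi_def sum_step[OF k] a1 by linarith
  qed
  have "Pop (star_edges n) (Phi n) v \<le> (\<Sum>k\<in>{2..n}. Phi n v + 2 * v k) / real (n - 1)"
    unfolding Pop_def star_sum star_card
    by (intro divide_right_mono sum_mono st) auto
  also have "\<dots> = Phi n v + 2 * (\<Sum>k\<in>{2..n}. v k) / real (n - 1)"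
    using assms(1) by (simp add: sum.distrib sum_distrib_left add_divide_distrib)
  also have "(\<Sum>k\<in>{2..n}. v k) \<le> 1"
  proof -
    have "{1..n} = insert 1 {2..n}" using assms(1) by auto
    then have "(\<Sum>i\<in>{1..n}. v i) = v 1 + (\<Sum>k\<in>{2..n}. v k)" by simp
    moreover have "0 \<le> v 1" using nn assms(1) by auto
    ultimately show ?thesis using s1 by linarith
  qed
  then have "Phi n v + 2 * (\<Sum>k\<in>{2..n}. v k) / real (n - 1) \<le> Phi n v + 2 / real (n - 1)"
    using assms(1) by (simp add: divide_right_mono)
  finally show ?thesis .
qed

lemma dev_lower:
  assumes "1 < K" "0 < ln (real n / K)" "v \<in> InvL n" "(\<Sum>j\<in>{1..n}. v0 j) = 1" "1 \<le> n"
  shows "(1 - 1/K) + (- ((1 - 1/K) / ln (real n / K))) * Phi n v \<le> l1_dev n v0 v"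
proof -
  define L where "L = ln (real n / K)"
  define q where "q = 1 - 1/K"
  have L0: "0 < L" using assms(2) by (simp add: L_def)
  have q0: "0 < q" using assms(1) by (simp add: q_def)
  have nn: "\<And>i. i \<in> {1..n} \<Longrightarrow> 0 \<le> v i" and s1: "(\<Sum>i\<in>{1..n}. v i) = 1"
    using assms(3) by (auto simp: InvL_def)
  have n0: "real n > 0" using assms(5) by simp
  have pt: "q * v i - q / L * hh (v i) \<le> \<bar>v i - 1 / real n\<bar>" if i: "i \<in> {1..n}" for i
  proof -
    have vi0: "0 \<le> v i" using nn i by auto
    have vi1: "v i \<le> 1" using member_le_sum[OF i, of v] nn s1 by auto
    show ?thesis
    proof (cases "v i \<ge> K / real n")
      case True
      then have "1 / real n \<le> v i / K" using assms(1) n0 by (simp add: field_simps)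
      then have "q * v i \<le> v i - 1 / real n" by (simp add: q_def algebra_simps)
      moreover have "0 \<le> q / L * hh (v i)" using q0 L0 hh_nonneg[OF vi0 vi1] by simp
      ultimately show ?thesis by linarith
    next
      case False
      show ?thesis
      proof (cases "v i = 0")
        case True then show ?thesis by (simp add: hh_def)
      next
        case False
        then have vp: "v i > 0" using vi0 by simp
        have "ln (v i) < ln (K / real n)" using \<open>\<not> K / real n \<le> v i\<close> vp by simp
        also have "ln (K / real n) = - L" using assms(1) n0 by (simp add: L_def ln_div)
        finally have "v i * ln (v i) \<le> v i * (- L)" using vp by (intro mult_left_mono) auto
        then have "v i * L \<le> hh (v i)" using vp by (simp add: hh_def)
        then have "q / L * (v i * L) \<le> q / L * hh (v i)" using q0 L0 by (intro mult_left_mono) auto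
        then have "q * v i \<le> q / L * hh (v i)" using L0 by simp
        then show ?thesis by simp
      qed
    qed
  qed
  have "q + (- (q / L)) * Phi n v \<le> q * (\<Sum>i\<in>{1..n}. v i) - q / L * (\<Sum>i\<in>{1..n}. hh (v i))"
  proof -
    have "0 \<le> v 1" using nn assms(5) by auto
    then have "(\<Sum>i\<in>{1..n}. hh (v i)) \<le> Phi n v" by (simp add: Phi_def)
    then have "q / L * (\<Sum>i\<in>{1..n}. hh (v i)) \<le> q / L * Phi n v" using q0 L0 by (intro mult_left_mono) auto
    then show ?thesis using s1 by simp
  qed
  also have "\<dots> = (\<Sum>i\<in>{1..n}. q * v i - q / L * hh (v i))"
    by (simp add: sum_subtractf sum_distrib_left)
  also have "\<dots> \<le> l1_dev n v0 v"
    unfolding l1_dev_def assms(4) by (rule sum_mono) (rule pt)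
  finally show ?thesis by (simp add: q_def L_def)
qed



definition e2 :: "nat \<Rightarrow> real" where "e2 i = (if i = 2 then 1 else 0)"

lemma e2_facts:
  assumes "2 \<le> n"
  shows "(\<Sum>i\<in>{1..n}. e2 i) = 1" "(\<Sum>i\<in>{1..n}. \<bar>e2 i\<bar>) = 1" "e2 \<in> InvL n" "Phi n e2 = 0"
proof -
  have m: "(2::nat) \<in> {1..n}" using assms by simp
  have a: "(\<Sum>i\<in>{1..n}. e2 i) = 1" unfolding e2_def using m by (simp add: sum.delta)
  show "(\<Sum>i\<in>{1..n}. e2 i) = 1" by (rule a)
  have "(\<Sum>i\<in>{1..n}. \<bar>e2 i\<bar>) = (\<Sum>i\<in>{1..n}. e2 i)" by (rule sum.cong) (auto simp: e2_def)
  then show "(\<Sum>i\<in>{1..n}. \<bar>e2 i\<bar>) = 1" using a by simp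
  show "e2 \<in> InvL n" using a by (auto simp: InvL_def e2_def)
  have "(\<Sum>i\<in>{1..n}. hh (e2 i)) = 0" by (rule sum.neutral) (auto simp: e2_def hh_def)
  then show "Phi n e2 = 0" by (simp add: Phi_def e2_def)
qed

definition PP :: "real \<Rightarrow> nat \<Rightarrow> nat \<Rightarrow> bool" where
  "PP \<epsilon> n t = (\<forall>v0. (\<Sum>i\<in>{1..n}. \<bar>v0 i\<bar>) = 1 \<longrightarrow> exp_l1_dev n (star_edges n) t v0 \<le> \<epsilon>)"

lemma t_eps1_PP: "t_eps1 n E \<epsilon> = (LEAST t. PP \<epsilon> n t)" if "E = star_edges n"
  using that by (simp add: t_eps1_def PP_def)

lemma exp_as_Ex:
  assumes "2 \<le> n"
  shows "exp_l1_dev n (star_edges n) t v0 = Ex (star_edges n) t (l1_dev n v0) v0"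
  unfolding exp_l1_dev_def
  by (rule exp_eq) (use assms in \<open>auto simp: star_finite star_card\<close>)

lemma not_PP0:
  assumes "2 \<le> n" "\<epsilon> < 1"
  shows "\<not> PP \<epsilon> n 0"
proof
  assume P: "PP \<epsilon> n 0"
  have "exp_l1_dev n (star_edges n) 0 e2 \<le> \<epsilon>" using P e2_facts(2)[OF assms(1)] by (simp add: PP_def)
  moreover have "exp_l1_dev n (star_edges n) 0 e2 = l1_dev n e2 e2" by (simp add: exp_as_Ex[OF assms(1)])
  moreover have "l1_dev n e2 e2 \<ge> 1"
  proof -
    have k: "(2::nat) \<in> {2..n}" using assms by simp
    have "l1_dev n e2 e2 = \<bar>e2 1 - 1 / real n\<bar> + \<bar>e2 2 - 1 / real n\<bar>
        + (\<Sum>i\<in>{1..n} - {1,2}. \<bar>e2 i - 1 / real n\<bar>)"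
      unfolding l1_dev_def e2_facts(1)[OF assms(1)] by (rule sum_split2[OF k])
    moreover have "0 \<le> (\<Sum>i\<in>{1..n} - {1,2}. \<bar>e2 i - 1 / real n\<bar>)" by (simp add: sum_nonneg)
    moreover have "\<bar>e2 1 - 1 / real n\<bar> + \<bar>e2 2 - 1 / real n\<bar> = 1"
      using assms(1) by (simp add: e2_def)
    ultimately show ?thesis by linarith
  qed
  ultimately show False using assms(2) by linarith
qed

lemma lower_big:
  assumes "0 < \<epsilon>" "\<epsilon> < 1" "3 \<le> n" "(2 / (1 - \<epsilon>))^2 \<le> real n" "PP \<epsilon> n t"
  shows "(1 - \<epsilon>) / 16 * real n * ln (real n) \<le> real t"
proof -
  define K where "K = 2 / (1 - \<epsilon>)"
  define L where "L = ln (real n / K)"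
  define q where "q = 1 - 1 / K"
  have n2: "2 \<le> n" using assms(3) by simp
  have n0: "real n > 0" using assms(3) by simp
  have K2: "2 \<le> K" using assms(1,2) by (simp add: K_def field_simps)
  have KK: "K * K \<le> real n" using assms(4) by (simp add: K_def power2_eq_square)
  have "K * 1 < K * K" using K2 by (intro mult_strict_left_mono) auto
  then have "K < real n" using KK by simp
  then have L0: "0 < L" using K2 by (simp add: L_def)
  have q_eq: "q = (1 + \<epsilon>) / 2" using assms(2) by (simp add: q_def K_def field_simps)
  have "exp_l1_dev n (star_edges n) t e2 \<le> \<epsilon>" using assms(5) e2_facts(2)[OF n2] by (simp add: PP_def)
  then have A: "Ex (star_edges n) t (l1_dev n e2) e2 \<le> \<epsilon>" by (simp add: exp_as_Ex[OF n2])
  have fin: "finite (star_edges n)" and cp: "card (star_edges n) > 0" using n2 by (auto simp: star_finite star_card)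
  have "Ex (star_edges n) t (\<lambda>v. (- (q / L)) * Phi n v + q) e2 \<le> Ex (star_edges n) t (l1_dev n e2) e2"
  proof (rule Ex_mono[where I = "InvL n"])
    show "avg_step e v \<in> InvL n" if "v \<in> InvL n" "e \<in> star_edges n" for v e using InvL_closed that by blast
    show "- (q / L) * Phi n v + q \<le> l1_dev n e2 v" if "v \<in> InvL n" for v
    proof -
      have "1 < K" using K2 by simp
      from dev_lower[OF this L0[unfolded L_def] that e2_facts(1)[OF n2]] n2
      show ?thesis unfolding q_def L_def by simp
    qed
    show "e2 \<in> InvL n" by (rule e2_facts(3)[OF n2])
  qed
  also have "Ex (star_edges n) t (\<lambda>v. (- (q / L)) * Phi n v + q) e2 = (- (q / L)) * Ex (star_edges n) t (Phi n) e2 + q"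
    by (rule Ex_affine[OF fin cp])
  finally have B: "q - (q / L) * Ex (star_edges n) t (Phi n) e2 \<le> \<epsilon>" using A by simp
  have "Ex (star_edges n) t (Phi n) e2 \<le> Phi n e2 + real t * (2 / real (n - 1))"
    by (rule Ex_drift[OF fin cp, where I = "InvL n"]) (use InvL_closed Pop_Phi[OF n2] e2_facts(3)[OF n2] in auto)
  then have Cc: "Ex (star_edges n) t (Phi n) e2 \<le> 2 * real t / real (n - 1)" using e2_facts(4)[OF n2] by (simp add: mult.commute)
  have q0: "0 \<le> q / L" using q_eq assms(1) L0 by simp
  have "q - \<epsilon> \<le> (q / L) * Ex (star_edges n) t (Phi n) e2" using B by simp
  also have "\<dots> \<le> (q / L) * (2 * real t / real (n - 1))" using Cc q0 by (rule mult_left_mono)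
  finally have D0: "q - \<epsilon> \<le> q / L * (2 * real t / real (n - 1))" .
  have h1: "q - \<epsilon> = (1 - \<epsilon>) / 2" using q_eq by (simp add: field_simps)
  have h2: "q / L * (2 * real t / real (n - 1)) = q * (2 * real t / real (n - 1)) / L" by simp
  have D: "(1 - \<epsilon>) / 2 \<le> q * (2 * real t / real (n - 1)) / L" using D0 unfolding h1 h2 .
  have n1: "real (n - 1) > 0" using n2 by simp
  have "q * (2 * real t / real (n - 1)) / L \<le> 2 * real t / real (n - 1) / L"
    using q_eq assms(1,2) L0 n1 by (intro divide_right_mono mult_left_le_one_le) auto
  with D have "(1 - \<epsilon>) / 2 \<le> 2 * real t / (real (n - 1) * L)" by simp
  then have E: "(1 - \<epsilon>) * (real (n - 1) * L) \<le> 4 * real t" using L0 n1 by (simp add: field_simps)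
  have lnK: "2 * ln K \<le> ln (real n)"
  proof -
    have "ln (K * K) \<le> ln (real n)" using KK K2 n2 by (subst ln_le_cancel_iff) auto
    then show ?thesis using K2 by (simp add: ln_mult)
  qed
  have LL: "ln (real n) / 2 \<le> L" using lnK K2 n0 by (simp add: L_def ln_div)
  have nn: "real n / 2 \<le> real (n - 1)" using n2 by (simp add: of_nat_diff)
  have ln0: "0 \<le> ln (real n)" using n2 by simp
  have "(real n / 2) * (ln (real n) / 2) \<le> real (n - 1) * L"
    using nn LL ln0 by (intro mult_mono) auto
  then have "(1 - \<epsilon>) * ((real n / 2) * (ln (real n) / 2)) \<le> (1 - \<epsilon>) * (real (n - 1) * L)"
    using assms(2) by (intro mult_left_mono) auto
  with E show ?thesis by (simp add: field_simps)
qed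



lemma ln_ge1: "3 \<le> n \<Longrightarrow> 1 \<le> ln (real n)"
proof -
  assume "3 \<le> n"
  then have "exp 1 \<le> real n" using exp_le by linarith
  then show ?thesis using \<open>3 \<le> n\<close> by (subst ln_ge_iff) auto
qed

theorem corollary4:
  fixes \<epsilon> :: real
  assumes "0 < \<epsilon>" and "\<epsilon> < 1"
  shows "\<exists>c C. 0 < c \<and> c \<le> C \<and>
           (\<forall>n::nat. n \<ge> 3 \<longrightarrow>
              c * real n * ln (real n) \<le> real (t_eps1 n (star_edges n) \<epsilon>) \<and>
              real (t_eps1 n (star_edges n) \<epsilon>) \<le> C * real n * ln (real n))"
proof -
  define M where "M = (2 / (1 - \<epsilon>))^2"
  define c where "c = min ((1 - \<epsilon>) / 16) (1 / (M * ln M))"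
  define C where "C = 3 + 4 * (- ln \<epsilon>)"
  have K2: "2 \<le> 2 / (1 - \<epsilon>)" using assms by (simp add: field_simps)
  have M4: "4 \<le> M" unfolding M_def using power_mono[OF K2, of 2] by simp
  have lnM: "0 < ln M" using M4 by simp
  have c0: "0 < c" using assms lnM M4 by (simp add: c_def)
  have "c \<le> (1 - \<epsilon>) / 16" unfolding c_def by (rule min.cobounded1)
  moreover have "(1 - \<epsilon>) / 16 \<le> 1" using assms by simp
  ultimately have c1: "c \<le> 1" by (rule order_trans)
  have lneps: "0 \<le> - ln \<epsilon>" using assms by simp
  have cC: "c \<le> C" using c1 lneps by (simp add: C_def)
  have main: "c * real n * ln (real n) \<le> real (t_eps1 n (star_edges n) \<epsilon>) \<and>
              real (t_eps1 n (star_edges n) \<epsilon>) \<le> C * real n * ln (real n)" if n3: "3 \<le> n" for n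
  proof -
    have n2: "2 \<le> n" using n3 by simp
    have n0: "0 < real n" using n3 by simp
    have ln1: "1 \<le> ln (real n)" by (rule ln_ge1[OF n3])
    define x where "x = 2 * real n * ln (real n / \<epsilon>^2)"
    define T where "T = nat \<lceil>x\<rceil>"
    have PT: "PP \<epsilon> n T" unfolding PP_def
      using upper[OF assms n2] real_nat_ceiling_ge[of x] by (auto simp: T_def x_def)
    define t where "t = t_eps1 n (star_edges n) \<epsilon>"
    have teq: "t = (LEAST t. PP \<epsilon> n t)" unfolding t_def by (rule t_eps1_PP) simp
    have Pt: "PP \<epsilon> n t" unfolding teq by (rule LeastI[of _ T]) (rule PT)
    have tT: "t \<le> T" unfolding teq by (rule Least_le) (rule PT)
    have lnx: "ln (real n / \<epsilon>^2) = ln (real n) - 2 * ln \<epsilon>"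
      using n0 assms(1) by (simp add: ln_div ln_realpow)
    have x0: "0 \<le> x" unfolding x_def lnx using ln1 lneps by simp
    have "real T \<le> x + 1"
      unfolding T_def using x0 of_int_ceiling_le_add_one[of x] by simp
    then have "real t \<le> x + 1" using tT by (meson of_nat_le_iff order_trans)
    also have "x + 1 \<le> C * real n * ln (real n)"
    proof -
      have a: "x = 2 * real n * ln (real n) + 4 * (- ln \<epsilon>) * real n" unfolding x_def lnx by (simp add: algebra_simps)
      have b0: "4 * (- ln \<epsilon>) * real n * 1 \<le> 4 * (- ln \<epsilon>) * real n * ln (real n)"
        using lneps n0 ln1 by (intro mult_left_mono) (auto intro: mult_nonneg_nonpos)
      then have b: "4 * (- ln \<epsilon>) * real n \<le> 4 * (- ln \<epsilon>) * real n * ln (real n)" by simp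
      have "1 * 1 \<le> real n * ln (real n)" using n3 ln1 by (intro mult_mono) auto
      then have d: "1 \<le> real n * ln (real n)" by simp
      show ?thesis unfolding a C_def using b d by (simp add: algebra_simps)
    qed
    finally have up: "real t \<le> C * real n * ln (real n)" .
    have low: "c * real n * ln (real n) \<le> real t"
    proof (cases "M \<le> real n")
      case True
      have "(1 - \<epsilon>) / 16 * real n * ln (real n) \<le> real t"
        by (rule lower_big[OF assms n3 _ Pt]) (use True M_def in simp)
      moreover have "c * real n * ln (real n) \<le> (1 - \<epsilon>) / 16 * real n * ln (real n)"
        using n0 ln1 \<open>c \<le> (1 - \<epsilon>) / 16\<close> by (intro mult_right_mono) auto
      ultimately show ?thesis by linarith
    next
      case False
      have "t \<noteq> 0" using Pt not_PP0[OF n2 assms(2)] by (metis gr0I)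
      then have t1: "1 \<le> real t" by simp
      have "real n * ln (real n) \<le> M * ln M"
        using False n0 ln1 by (intro mult_mono) auto
      then have "c * (real n * ln (real n)) \<le> (1 / (M * ln M)) * (M * ln M)"
        using False c0 M4 lnM min.cobounded2[of "(1 - \<epsilon>) / 16" "1 / (M * ln M)"] n0 ln1
        by (intro mult_mono) (auto simp: c_def[symmetric])
      also have "\<dots> = 1" using M4 lnM by simp
      finally show ?thesis using t1 by (simp add: mult.assoc)
    qed
    show ?thesis using up low by (simp add: t_def)
  qed
  show ?thesis using c0 cC main by blast
qed

end
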